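(* Let $e_k(x)=x^k$ for $k\in\{0,1,2\}$, $x\in[0,1]$, and let $A:C([0,1])\to C([0,1])$ be a weakly nonlinear and monotone operator with $A(1)(x)>0$ for all $x\in[0,1]$. Let $T_n:C([0,1])\to C([0,1])$ ($n\ge1$) be weakly nonlinear and monotone operators. Put $M=\big(\inf_{x\in[0,1]}A(1)(x)\big)^{-1}$ and $$\mu_n=\|T_n(e_2)A(1)-2T_n(-e_1)A(-e_1)+T_n(1)A(e_2)\|^{1/2}.$$ Then for every $f\in C([0,1])$ and $n\ge1$, $$\|T_n(f)-A(f)\|\le M\big\{\|T_n(1)-A(1)\|\cdot\|A(f)\|+(\|T_n(1)A(1)\|+1)\,\omega(f,\mu_n)\big\}.$$ If moreover $T_n(1)=A(1)$, then $\|T_n(f)-A(f)\|\le M\big(\|A(1)^2\|+1\big)\,\omega(f,\mu_n)$.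
   Context: $C([0,1])$ is the space of continuous real functions on $[0,1]$ with pointwise order and sup norm $\|g\|=\sup_{x\in[0,1]}|g(x)|$; products are pointwise and $1=e_0$ is the constant function one. An operator $T:C([0,1])\to C([0,1])$ is weakly nonlinear if $T(f+g)\le T(f)+T(g)$ and $T(\alpha f)=\alpha T(f)$ for all $f,g$ and $\alpha\ge0$, and $T(f+\alpha\cdot1)=T(f)+\alpha T(1)$ for all $f$ and $\alpha\ge0$. $T$ is monotone if $f\le g$ implies $T(f)\le T(g)$. The modulus of continuity is $\omega(f,\delta)=\sup\{|f(x)-f(y)|:x,y\in[0,1],|x-y|\le\delta\}$ for $\delta>0$, with $\omega(f,0)=0$. *)

theory Defs
  imports "HOL-Analysis.Analysis"
begin

text \<open>Elements of C([0,1]) are represented by functions real => real that are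
continuous on [0,1]; only their values on [0,1] matter. Order, equality and
the sup norm are all taken on [0,1].\<close>

definition C01 :: "(real \<Rightarrow> real) set" where
  "C01 = {f. continuous_on {0..1} f}"

definition norm01 :: "(real \<Rightarrow> real) \<Rightarrow> real" where
  "norm01 g = (SUP x\<in>{0..1}. \<bar>g x\<bar>)"

definition modcont :: "(real \<Rightarrow> real) \<Rightarrow> real \<Rightarrow> real" where
  "modcont f \<delta> = (if \<delta> = 0 then 0 else
     Sup {\<bar>f x - f y\<bar> | x y. x \<in> {0..1} \<and> y \<in> {0..1} \<and> \<bar>x - y\<bar> \<le> \<delta>})"

definition maps_C01 :: "((real \<Rightarrow> real) \<Rightarrow> (real \<Rightarrow> real)) \<Rightarrow> bool" where
  "maps_C01 T = (\<forall>f\<in>C01. T f \<in> C01)"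

definition weakly_nonlinear :: "((real \<Rightarrow> real) \<Rightarrow> (real \<Rightarrow> real)) \<Rightarrow> bool" where
  "weakly_nonlinear T =
    ((\<forall>f\<in>C01. \<forall>g\<in>C01. \<forall>x\<in>{0..1}. T (\<lambda>t. f t + g t) x \<le> T f x + T g x) \<and>
     (\<forall>f\<in>C01. \<forall>\<alpha>::real. \<alpha> \<ge> 0 \<longrightarrow> (\<forall>x\<in>{0..1}. T (\<lambda>t. \<alpha> * f t) x = \<alpha> * T f x)) \<and>
     (\<forall>f\<in>C01. \<forall>\<alpha>::real. \<alpha> \<ge> 0 \<longrightarrow>
        (\<forall>x\<in>{0..1}. T (\<lambda>t. f t + \<alpha>) x = T f x + \<alpha> * T (\<lambda>_. 1) x)))"

definition monotone01 :: "((real \<Rightarrow> real) \<Rightarrow> (real \<Rightarrow> real)) \<Rightarrow> bool" where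
  "monotone01 T = (\<forall>f\<in>C01. \<forall>g\<in>C01. (\<forall>x\<in>{0..1}. f x \<le> g x) \<longrightarrow>
                      (\<forall>x\<in>{0..1}. T f x \<le> T g x))"

end

theory Submission
  imports Defs
begin


lemma C01_I: "continuous_on {0..1} f \<Longrightarrow> f \<in> C01" by (simp add: C01_def)
lemma C01_D: "f \<in> C01 \<Longrightarrow> continuous_on {0..1} f" by (simp add: C01_def)

lemma wn_sub: "weakly_nonlinear W \<Longrightarrow> f \<in> C01 \<Longrightarrow> g \<in> C01 \<Longrightarrow> x \<in> {0..1} \<Longrightarrow>
   W (\<lambda>t. f t + g t) x \<le> W f x + W g x"
  unfolding weakly_nonlinear_def by blast

lemma wn_hom: "weakly_nonlinear W \<Longrightarrow> f \<in> C01 \<Longrightarrow> \<alpha> \<ge> 0 \<Longrightarrow> x \<in> {0..1} \<Longrightarrow>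
   W (\<lambda>t. \<alpha> * f t) x = \<alpha> * W f x"
  unfolding weakly_nonlinear_def by blast

lemma wn_tr0: "weakly_nonlinear W \<Longrightarrow> f \<in> C01 \<Longrightarrow> \<alpha> \<ge> 0 \<Longrightarrow> x \<in> {0..1} \<Longrightarrow>
   W (\<lambda>t. f t + \<alpha>) x = W f x + \<alpha> * W (\<lambda>_. 1) x"
  unfolding weakly_nonlinear_def by blast

lemma wn_tr: assumes "weakly_nonlinear W" "f \<in> C01" "x \<in> {0..1}"
  shows "W (\<lambda>t. f t + K) x = W f x + K * W (\<lambda>_. 1) x"
proof (cases "K \<ge> 0")
  case True then show ?thesis using wn_tr0 assms by blast
next
  case False
  have c: "(\<lambda>t. f t + K) \<in> C01" using assms(2)
    by (intro C01_I continuous_intros) (auto dest: C01_D)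
  have "W (\<lambda>t. (f t + K) + (-K)) x = W (\<lambda>t. f t + K) x + (-K) * W (\<lambda>_. 1) x"
    using wn_tr0[OF assms(1) c, of "-K" x] False assms(3) by simp
  then show ?thesis by simp
qed

lemma one_C01: "(\<lambda>_. 1) \<in> C01" by (intro C01_I continuous_intros)

lemma wn_zero: assumes "weakly_nonlinear W" "x \<in> {0..1}" shows "W (\<lambda>_. 0) x = 0"
  using wn_hom[OF assms(1) one_C01, of 0 x] assms(2) by simp

lemma mono01: "monotone01 W \<Longrightarrow> f \<in> C01 \<Longrightarrow> g \<in> C01 \<Longrightarrow> (\<forall>x\<in>{0..1}. f x \<le> g x) \<Longrightarrow>
   x \<in> {0..1} \<Longrightarrow> W f x \<le> W g x"
  unfolding monotone01_def by blast

lemma wn_neg: assumes "weakly_nonlinear W" "h \<in> C01" "x \<in> {0..1}"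
  shows "W (\<lambda>t. - h t) x \<ge> - W h x"
proof -
  have c: "(\<lambda>t. - h t) \<in> C01" using assms(2)
    by (intro C01_I continuous_intros) (auto dest: C01_D)
  have "W (\<lambda>t. h t + - h t) x \<le> W h x + W (\<lambda>t. - h t) x"
    using wn_sub[OF assms(1) assms(2) c assms(3)] .
  then show ?thesis using wn_zero[OF assms(1) assms(3)] by simp
qed

lemma key:
  assumes wP: "weakly_nonlinear P" and mP: "monotone01 P"
    and wR: "weakly_nonlinear R" and mR: "monotone01 R"
    and f: "f \<in> C01" and x: "x \<in> {0..1}" and c: "c \<ge> 0"
    and H: "\<forall>s\<in>{0..1}. \<forall>t\<in>{0..1}. f t - f s \<le> E + c * (t - s)^2"
  shows "R (\<lambda>_. 1) x * P f x - P (\<lambda>_. 1) x * R f x \<le> P (\<lambda>_. 1) x * R (\<lambda>_. 1) x * E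
     + c * (P (\<lambda>t. t^2) x * R (\<lambda>_. 1) x - 2 * P (\<lambda>t. - t) x * R (\<lambda>t. - t) x
            + P (\<lambda>_. 1) x * R (\<lambda>t. t^2) x)"
proof -
  define a where "a = P (\<lambda>_. 1) x"
  define b where "b = R (\<lambda>_. 1) x"
  define \<tau> where "\<tau> = P (\<lambda>t. - t) x"
  define \<sigma> where "\<sigma> = R (\<lambda>t. - t) x"
  have fc: "continuous_on {0..1} f" using f by (rule C01_D)
  have e2: "(\<lambda>t::real. t^2) \<in> C01" by (intro C01_I continuous_intros)
  have e1: "(\<lambda>t::real. - t) \<in> C01" by (intro C01_I continuous_intros)
  have zC: "(\<lambda>_::real. 0::real) \<in> C01" by (intro C01_I continuous_intros)
  have a0: "a \<ge> 0"
    using mono01[OF mP zC one_C01 _ x] wn_zero[OF wP x] unfolding a_def by simp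
  have t0: "\<tau> \<le> 0"
    using mono01[OF mP e1 zC _ x] wn_zero[OF wP x] unfolding \<tau>_def by simp
  have step1: "P f x \<le> a * (f s + E + c * s^2) + c * P (\<lambda>t. t^2) x + 2 * c * s * \<tau>"
    if s: "s \<in> {0..1}" for s
  proof -
    define K where "K = f s + E + c * s^2"
    have s0: "2 * c * s \<ge> 0" using s c by simp
    have g1: "(\<lambda>t. c * t^2) \<in> C01" by (intro C01_I continuous_intros)
    have g2: "(\<lambda>t. 2 * c * s * - t) \<in> C01" by (intro C01_I continuous_intros)
    have g: "(\<lambda>t. c * t^2 + 2 * c * s * - t) \<in> C01" by (intro C01_I continuous_intros)
    have gK: "(\<lambda>t. c * t^2 + 2 * c * s * - t + K) \<in> C01" by (intro C01_I continuous_intros)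
    have le: "\<forall>t\<in>{0..1}. f t \<le> c * t^2 + 2 * c * s * - t + K"
    proof
      fix t :: real assume t: "t \<in> {0..1}"
      have "f t - f s \<le> E + c * (t - s)^2" using H s t by blast
      then show "f t \<le> c * t^2 + 2 * c * s * - t + K"
        unfolding K_def by (simp add: power2_diff algebra_simps)
    qed
    have "P f x \<le> P (\<lambda>t. c * t^2 + 2 * c * s * - t + K) x"
      using mono01[OF mP f gK le x] .
    also have "\<dots> = P (\<lambda>t. c * t^2 + 2 * c * s * - t) x + K * a"
      using wn_tr[OF wP g x] unfolding a_def by simp
    also have "P (\<lambda>t. c * t^2 + 2 * c * s * - t) x \<le> P (\<lambda>t. c * t^2) x + P (\<lambda>t. 2 * c * s * - t) x"
      using wn_sub[OF wP g1 g2 x] .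
    also have "P (\<lambda>t. c * t^2) x = c * P (\<lambda>t. t^2) x"
      using wn_hom[OF wP e2 c x] .
    also have "P (\<lambda>t. 2 * c * s * - t) x = 2 * c * s * \<tau>"
      using wn_hom[OF wP e1 s0 x] unfolding \<tau>_def .
    finally show ?thesis unfolding K_def by (simp add: algebra_simps)
  qed
  define K where "K = P f x - a * E - c * P (\<lambda>t. t^2) x"
  define hn where "hn = (\<lambda>s::real. (c * a) * s^2 + (2 * c * (- \<tau>)) * - s)"
  have hnC: "hn \<in> C01" unfolding hn_def by (intro C01_I continuous_intros)
  have mhnC: "(\<lambda>s. - hn s) \<in> C01" unfolding hn_def by (intro C01_I continuous_intros)
  have gC: "(\<lambda>s. - hn s + K) \<in> C01" unfolding hn_def by (intro C01_I continuous_intros)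
  have afC: "(\<lambda>s. a * f s) \<in> C01" using fc by (intro C01_I continuous_intros)
  have le2: "\<forall>s\<in>{0..1}. - hn s + K \<le> a * f s"
  proof
    fix s :: real assume s: "s \<in> {0..1}"
    show "- hn s + K \<le> a * f s" using step1[OF s] unfolding hn_def K_def
      by (simp add: algebra_simps)
  qed
  have "R (\<lambda>s. - hn s + K) x \<le> R (\<lambda>s. a * f s) x" using mono01[OF mR gC afC le2 x] .
  also have "R (\<lambda>s. a * f s) x = a * R f x" using wn_hom[OF wR f a0 x] .
  finally have A1: "R (\<lambda>s. - hn s + K) x \<le> a * R f x" .
  have A2: "R (\<lambda>s. - hn s + K) x = R (\<lambda>s. - hn s) x + K * b"
    using wn_tr[OF wR mhnC x] unfolding b_def by simp
  have A3: "R (\<lambda>s. - hn s) x \<ge> - R hn x" using wn_neg[OF wR hnC x] .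
  have ca: "c * a \<ge> 0" using c a0 by simp
  have ct: "2 * c * (- \<tau>) \<ge> 0" using c t0 by (simp add: mult_nonneg_nonpos)
  have h1: "(\<lambda>s::real. (c * a) * s^2) \<in> C01" by (intro C01_I continuous_intros)
  have h2: "(\<lambda>s::real. (2 * c * (- \<tau>)) * - s) \<in> C01" by (intro C01_I continuous_intros)
  have "R hn x \<le> R (\<lambda>s. (c * a) * s^2) x + R (\<lambda>s. (2 * c * (- \<tau>)) * - s) x"
    unfolding hn_def using wn_sub[OF wR h1 h2 x] .
  also have "R (\<lambda>s. (c * a) * s^2) x = (c * a) * R (\<lambda>t. t^2) x" using wn_hom[OF wR e2 ca x] .
  also have "R (\<lambda>s. (2 * c * (- \<tau>)) * - s) x = (2 * c * (- \<tau>)) * \<sigma>"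
    using wn_hom[OF wR e1 ct x] unfolding \<sigma>_def .
  finally have A4: "R hn x \<le> c * a * R (\<lambda>t. t^2) x + 2 * c * (- \<tau>) * \<sigma>" .
  have "b * P f x - a * R f x \<le> a * b * E + c * (P (\<lambda>t. t^2) x * b - 2 * \<tau> * \<sigma> + a * R (\<lambda>t. t^2) x)"
    using A1 A2 A3 A4 unfolding K_def by (simp add: algebra_simps)
  then show ?thesis unfolding a_def b_def \<tau>_def \<sigma>_def .
qed


lemma bnd01: assumes "continuous_on {0..1} g" shows "\<exists>B. \<forall>x\<in>{0..1::real}. \<bar>g x\<bar> \<le> (B::real)"
proof -
  have "compact (g ` {0..1})" using assms by (intro compact_continuous_image) auto
  then obtain B where "\<forall>y\<in>g ` {0..1}. norm y \<le> B" using compact_imp_bounded bounded_iff by metis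
  then show ?thesis by auto
qed

lemma norm_ge: assumes "continuous_on {0..1} g" "x \<in> {0..1}" shows "\<bar>g x\<bar> \<le> norm01 g"
proof -
  obtain B where B: "\<forall>x\<in>{0..1::real}. \<bar>g x\<bar> \<le> B" using bnd01[OF assms(1)] by blast
  have "bdd_above ((\<lambda>x. \<bar>g x\<bar>) ` {0..1})" using B by (intro bdd_aboveI2) auto
  then show ?thesis unfolding norm01_def using assms(2) by (intro cSUP_upper) auto
qed

lemma norm_le: assumes "\<forall>x\<in>{0..1}. \<bar>g x\<bar> \<le> K" shows "norm01 g \<le> K"
  unfolding norm01_def using assms by (intro cSUP_least) auto

lemma modcont_ge: assumes "continuous_on {0..1} f" "\<delta> > 0" "x \<in> {0..1}" "y \<in> {0..1}" "\<bar>x - y\<bar> \<le> \<delta>"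
  shows "\<bar>f x - f y\<bar> \<le> modcont f \<delta>"
proof -
  obtain B where B: "\<forall>x\<in>{0..1::real}. \<bar>f x\<bar> \<le> B" using bnd01[OF assms(1)] by blast
  have "bdd_above {\<bar>f x - f y\<bar> | x y. x \<in> {0..1} \<and> y \<in> {0..1} \<and> \<bar>x - y\<bar> \<le> \<delta>}"
  proof (rule bdd_aboveI)
    fix z assume "z \<in> {\<bar>f x - f y\<bar> | x y. x \<in> {0..1} \<and> y \<in> {0..1} \<and> \<bar>x - y\<bar> \<le> \<delta>}"
    then obtain x y where "z = \<bar>f x - f y\<bar>" "x \<in> {0..1}" "y \<in> {0..1}" by blast
    moreover have "\<bar>f x\<bar> \<le> B" "\<bar>f y\<bar> \<le> B" using B \<open>x \<in> {0..1}\<close> \<open>y \<in> {0..1}\<close> by auto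
    ultimately show "z \<le> 2 * B" by linarith
  qed
  then show ?thesis unfolding modcont_def using assms by (auto intro!: cSup_upper)
qed

lemma modcont_nonneg: assumes "continuous_on {0..1} f" "\<delta> \<ge> 0" shows "modcont f \<delta> \<ge> 0"
proof (cases "\<delta> = 0")
  case True then show ?thesis by (simp add: modcont_def)
next
  case False
  then show ?thesis using modcont_ge[OF assms(1), of \<delta> 0 0] assms(2) by simp
qed

lemma chain: assumes "continuous_on {0..1} f" "\<delta> > 0" "s \<in> {0..1}" "t \<in> {0..1}"
  "n \<ge> 1" "\<bar>t - s\<bar> \<le> real n * \<delta>"
  shows "f t - f s \<le> real n * modcont f \<delta>"
proof -
  define h where "h = (t - s) / real n"
  define p where "p = (\<lambda>i::nat. s + real i * h)"
  have pin: "p i \<in> {0..1}" if "i \<le> n" for i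
  proof -
    have "p i = (1 - real i / real n) * s + (real i / real n) * t"
      unfolding p_def h_def using assms(5) by (simp add: field_simps)
    moreover have "real i / real n \<le> 1" "0 \<le> real i / real n" using that assms(5) by auto
    moreover have "0 \<le> (1 - real i / real n) * s + (real i / real n) * t"
      using assms(3,4) \<open>real i / real n \<le> 1\<close> \<open>0 \<le> real i / real n\<close> by simp
    moreover have "(1 - real i / real n) * s + (real i / real n) * t \<le> 1"
      using assms(3,4) \<open>real i / real n \<le> 1\<close> \<open>0 \<le> real i / real n\<close>
      by (intro convex_bound_le) auto
    ultimately show ?thesis by simp
  qed
  have hd: "\<bar>h\<bar> \<le> \<delta>" unfolding h_def using assms(5,6)
    by (simp add: abs_div divide_le_eq mult.commute)
  have "f t - f s = (\<Sum>i<n. f (p (Suc i)) - f (p i))"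
    using sum_lessThan_telescope[of "\<lambda>i. f (p i)" n] assms(5)
    unfolding p_def h_def by simp
  also have "\<dots> \<le> (\<Sum>i<n. modcont f \<delta>)"
  proof (rule sum_mono)
    fix i assume i: "i \<in> {..<n}"
    have "\<bar>f (p (Suc i)) - f (p i)\<bar> \<le> modcont f \<delta>"
    proof (rule modcont_ge[OF assms(1,2) pin[of "Suc i"] pin[of i]])
      show "Suc i \<le> n" "i \<le> n" using i by auto
      have "p (Suc i) - p i = h" unfolding p_def by (simp add: algebra_simps)
      then show "\<bar>p (Suc i) - p i\<bar> \<le> \<delta>" using hd by simp
    qed
    then show "f (p (Suc i)) - f (p i) \<le> modcont f \<delta>" by simp
  qed
  finally show ?thesis by simp
qed

lemma modcont_quad: assumes "continuous_on {0..1} f" "\<delta> > 0" "s \<in> {0..1}" "t \<in> {0..1}"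
  shows "f t - f s \<le> modcont f \<delta> + (modcont f \<delta> / \<delta>^2) * (t - s)^2"
proof (cases "\<bar>t - s\<bar> \<le> \<delta>")
  case True
  have "f t - f s \<le> modcont f \<delta>" using modcont_ge[OF assms(1,2,4,3) True] by simp
  moreover have "(modcont f \<delta> / \<delta>^2) * (t - s)^2 \<ge> 0"
    using modcont_nonneg[OF assms(1)] assms(2) by simp
  ultimately show ?thesis by simp
next
  case False
  define r where "r = \<bar>t - s\<bar> / \<delta>"
  have r1: "r > 1" unfolding r_def using False assms(2) by (simp add: less_divide_eq)
  define n where "n = nat \<lceil>r\<rceil>"
  have n1: "n \<ge> 1" unfolding n_def using r1 by linarith
  have nr: "real n \<ge> r" "real n \<le> r + 1" unfolding n_def using r1 by linarith+
  have "\<bar>t - s\<bar> \<le> real n * \<delta>" using nr assms(2) unfolding r_def by (simp add: divide_le_eq)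
  then have "f t - f s \<le> real n * modcont f \<delta>" using chain[OF assms n1] by simp
  also have "\<dots> \<le> (1 + r^2) * modcont f \<delta>"
  proof (rule mult_right_mono)
    show "real n \<le> 1 + r^2" using nr r1 by (smt (verit) power2_eq_square mult_le_cancel_left1)
    show "0 \<le> modcont f \<delta>" using modcont_nonneg[OF assms(1)] assms(2) by simp
  qed
  also have "\<dots> = modcont f \<delta> + (modcont f \<delta> / \<delta>^2) * (t - s)^2"
    unfolding r_def using assms(2) by (simp add: power_divide field_simps)
  finally show ?thesis .
qed

lemma eps_quad: fixes f :: "real \<Rightarrow> real" assumes "continuous_on {0..1} f" "\<epsilon> > 0"
  shows "\<exists>C\<ge>0. \<forall>s\<in>{0..1}. \<forall>t\<in>{0..1}. f t - f s \<le> \<epsilon> + C * (t - s)^2"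
proof -
  obtain B where B: "\<forall>x\<in>{0..1::real}. \<bar>f x\<bar> \<le> B" using bnd01[OF assms(1)] by blast
  have "uniformly_continuous_on {0..1} f" using assms(1) compact_uniformly_continuous by blast
  then obtain d where d: "d > 0" "\<And>x y. x \<in> {0..1} \<Longrightarrow> y \<in> {0..1} \<Longrightarrow> dist y x < d \<Longrightarrow> dist (f y) (f x) < \<epsilon>"
    unfolding uniformly_continuous_on_def using assms(2) by metis
  have B0: "B \<ge> 0" using B by force
  show ?thesis
  proof (intro exI[of _ "2 * B / d^2"] conjI ballI)
    show "0 \<le> 2 * B / d^2" using B0 by simp
    fix s t :: real assume s: "s \<in> {0..1}" and t: "t \<in> {0..1}"
    show "f t - f s \<le> \<epsilon> + 2 * B / d^2 * (t - s)^2"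
    proof (cases "\<bar>t - s\<bar> < d")
      case True
      then have "\<bar>f t - f s\<bar> < \<epsilon>" using d(2)[OF s t] by (simp add: dist_real_def)
      moreover have "0 \<le> 2 * B / d^2 * (t - s)^2" using B0 by simp
      ultimately show ?thesis by simp
    next
      case False
      have "d^2 \<le> (t - s)^2" using False d(1)
        by (metis abs_of_pos linorder_not_less power2_abs power_mono abs_ge_zero)
      then have "1 \<le> (t - s)^2 / d^2" using d(1) by simp
      then have "2 * B \<le> 2 * B * ((t - s)^2 / d^2)" using B0 mult_left_mono[of 1 "(t - s)^2 / d^2" "2 * B"] by simp
      moreover have "\<bar>f t\<bar> \<le> B" "\<bar>f s\<bar> \<le> B" using B s t by auto
      then have "f t - f s \<le> 2 * B" by linarith
      ultimately show ?thesis using assms(2) by simp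
    qed
  qed
qed

theorem corollary1:
  fixes A :: "(real \<Rightarrow> real) \<Rightarrow> (real \<Rightarrow> real)"
    and T :: "nat \<Rightarrow> (real \<Rightarrow> real) \<Rightarrow> (real \<Rightarrow> real)"
  assumes "maps_C01 A" "weakly_nonlinear A" "monotone01 A"
    and "\<forall>x\<in>{0..1}. A (\<lambda>_. 1) x > 0"
    and "\<And>n. n \<ge> 1 \<Longrightarrow> maps_C01 (T n) \<and> weakly_nonlinear (T n) \<and> monotone01 (T n)"
  defines "M \<equiv> 1 / (INF x\<in>{0..1}. A (\<lambda>_. 1) x)"
    and "\<mu> \<equiv> (\<lambda>n. sqrt (norm01 (\<lambda>x. T n (\<lambda>t. t ^ 2) x * A (\<lambda>_. 1) x
              - 2 * T n (\<lambda>t. - t) x * A (\<lambda>t. - t) x + T n (\<lambda>_. 1) x * A (\<lambda>t. t ^ 2) x)))"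
  shows "\<forall>f\<in>C01. \<forall>n\<ge>1.
     norm01 (\<lambda>x. T n f x - A f x) \<le>
       M * (norm01 (\<lambda>x. T n (\<lambda>_. 1) x - A (\<lambda>_. 1) x) * norm01 (A f)
            + (norm01 (\<lambda>x. T n (\<lambda>_. 1) x * A (\<lambda>_. 1) x) + 1) * modcont f (\<mu> n))
     \<and> ((\<forall>x\<in>{0..1}. T n (\<lambda>_. 1) x = A (\<lambda>_. 1) x) \<longrightarrow>
        norm01 (\<lambda>x. T n f x - A f x) \<le>
          M * (norm01 (\<lambda>x. (A (\<lambda>_. 1) x) ^ 2) + 1) * modcont f (\<mu> n))"
proof (intro ballI allI impI)
  fix f n assume f: "f \<in> C01" and n: "(n::nat) \<ge> 1"
  have wA: "weakly_nonlinear A" and mA: "monotone01 A" and cA: "maps_C01 A" using assms(1-3) by auto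
  have wP: "weakly_nonlinear (T n)" and mP: "monotone01 (T n)" and cP: "maps_C01 (T n)"
    using assms(5)[OF n] by auto
  have fc: "continuous_on {0..1} f" using f by (rule C01_D)
  have e2: "(\<lambda>t::real. t^2) \<in> C01" by (intro C01_I continuous_intros)
  have e1: "(\<lambda>t::real. - t) \<in> C01" by (intro C01_I continuous_intros)
  have cont: "continuous_on {0..1} (W g)" if "maps_C01 W" "g \<in> C01" for W g
    using that unfolding maps_C01_def by (auto intro: C01_D)
  note cs = cont[OF cA one_C01] cont[OF cA e1] cont[OF cA e2] cont[OF cA f]
     cont[OF cP one_C01] cont[OF cP e1] cont[OF cP e2] cont[OF cP f]
  define Q where "Q = (\<lambda>x. T n (\<lambda>t. t ^ 2) x * A (\<lambda>_. 1) x
              - 2 * T n (\<lambda>t. - t) x * A (\<lambda>t. - t) x + T n (\<lambda>_. 1) x * A (\<lambda>t. t ^ 2) x)"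
  have Qc: "continuous_on {0..1} Q" unfolding Q_def using cs by (intro continuous_intros)
  have mu: "\<mu> n = sqrt (norm01 Q)" unfolding \<mu>_def Q_def by simp
  have NQ0: "norm01 Q \<ge> 0" using norm_ge[OF Qc, of 0] by simp
  have Qle: "Q x \<le> norm01 Q" if "x \<in> {0..1}" for x using norm_ge[OF Qc that] by simp
  define \<omega> where "\<omega> = modcont f (\<mu> n)"
  have om0: "\<omega> \<ge> 0" unfolding \<omega>_def using modcont_nonneg[OF fc] mu NQ0 by simp
  have sym: "R (\<lambda>_. 1) x * P f x - P (\<lambda>_. 1) x * R f x \<le> P (\<lambda>_. 1) x * R (\<lambda>_. 1) x * E + c * Q x"
    if "x \<in> {0..1}" "c \<ge> 0" "\<forall>s\<in>{0..1}. \<forall>t\<in>{0..1}. f t - f s \<le> E + c * (t - s)^2"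
      "(P = T n \<and> R = A) \<or> (P = A \<and> R = T n)" for x c E P R
    using that(4)
  proof
    assume "P = T n \<and> R = A"
    then show ?thesis using key[OF wP mP wA mA f that(1-3)] unfolding Q_def by simp
  next
    assume "P = A \<and> R = T n"
    then show ?thesis using key[OF wA mA wP mP f that(1-3)] unfolding Q_def
      by (simp add: algebra_simps)
  qed
  have pt: "\<bar>A (\<lambda>_. 1) x * T n f x - T n (\<lambda>_. 1) x * A f x\<bar>
      \<le> (T n (\<lambda>_. 1) x * A (\<lambda>_. 1) x + 1) * \<omega>" if x: "x \<in> {0..1}" for x
  proof (cases "\<mu> n > 0")
    case True
    define c where "c = \<omega> / (\<mu> n)^2"
    have c0: "c \<ge> 0" unfolding c_def using om0 by simp
    have H: "\<forall>s\<in>{0..1}. \<forall>t\<in>{0..1}. f t - f s \<le> \<omega> + c * (t - s)^2"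
      unfolding c_def \<omega>_def using modcont_quad[OF fc True] by blast
    have cQ: "c * Q x \<le> \<omega>"
    proof -
      have "c * Q x \<le> c * norm01 Q" using Qle[OF x] c0 by (simp add: mult_left_mono)
      also have "norm01 Q = (\<mu> n)^2" using mu NQ0 by simp
      finally show ?thesis unfolding c_def using True by simp
    qed
    have 1: "A (\<lambda>_. 1) x * T n f x - T n (\<lambda>_. 1) x * A f x \<le> T n (\<lambda>_. 1) x * A (\<lambda>_. 1) x * \<omega> + c * Q x"
      using sym[OF x c0 H] by simp
    have 2: "T n (\<lambda>_. 1) x * A f x - A (\<lambda>_. 1) x * T n f x \<le> A (\<lambda>_. 1) x * T n (\<lambda>_. 1) x * \<omega> + c * Q x"
      using sym[OF x c0 H, of A "T n"] by simp
    show ?thesis using 1 2 cQ by (simp add: algebra_simps abs_le_iff)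
  next
    case False
    then have mu0: "\<mu> n = 0" using mu NQ0 by simp
    then have NQ: "norm01 Q = 0" using mu NQ0 by simp
    have om: "\<omega> = 0" unfolding \<omega>_def mu0 modcont_def by simp
    have ab0: "T n (\<lambda>_. 1) x * A (\<lambda>_. 1) x \<ge> 0"
    proof -
      have zC: "(\<lambda>_::real. 0::real) \<in> C01" by (intro C01_I continuous_intros)
      have "T n (\<lambda>_. 1) x \<ge> 0"
        using mono01[OF mP zC one_C01 _ x] wn_zero[OF wP x] by simp
      then show ?thesis using assms(4) x by (simp add: less_imp_le)
    qed
    define ab where "ab = T n (\<lambda>_. 1) x * A (\<lambda>_. 1) x"
    have "\<bar>A (\<lambda>_. 1) x * T n f x - T n (\<lambda>_. 1) x * A f x\<bar> \<le> 0"
    proof (rule field_le_epsilon)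
      fix e :: real assume e: "e > 0"
      define \<epsilon> where "\<epsilon> = e / (ab + 1)"
      have ep: "\<epsilon> > 0" unfolding \<epsilon>_def using e ab0 ab_def by simp
      obtain C where C: "C \<ge> 0" "\<forall>s\<in>{0..1}. \<forall>t\<in>{0..1}. f t - f s \<le> \<epsilon> + C * (t - s)^2"
        using eps_quad[OF fc ep] by blast
      have CQ: "C * Q x \<le> 0" using Qle[OF x] NQ C(1) by (simp add: mult_nonneg_nonpos)
      have abe: "ab * \<epsilon> \<le> e" unfolding \<epsilon>_def using e ab0 ab_def by (simp add: field_simps)
      have 1: "A (\<lambda>_. 1) x * T n f x - T n (\<lambda>_. 1) x * A f x \<le> ab * \<epsilon> + C * Q x"
        using sym[OF x C] unfolding ab_def by simp
      have 2: "T n (\<lambda>_. 1) x * A f x - A (\<lambda>_. 1) x * T n f x \<le> ab * \<epsilon> + C * Q x"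
        using sym[OF x C, of A "T n"] unfolding ab_def by (simp add: algebra_simps)
      show "\<bar>A (\<lambda>_. 1) x * T n f x - T n (\<lambda>_. 1) x * A f x\<bar> \<le> 0 + e"
        using 1 2 CQ abe by (simp add: abs_le_iff)
    qed
    then show ?thesis using om by simp
  qed
  obtain x0 where x0: "x0 \<in> {0..1}" "\<forall>y\<in>{0..1}. A (\<lambda>_. 1) x0 \<le> A (\<lambda>_. 1) y"
    using continuous_attains_inf[of "{0..1::real}" "A (\<lambda>_. 1)"] cs(1) by auto
  have inf: "(INF x\<in>{0..1}. A (\<lambda>_. 1) x) = A (\<lambda>_. 1) x0"
  proof (rule antisym)
    show "(INF x\<in>{0..1}. A (\<lambda>_. 1) x) \<le> A (\<lambda>_. 1) x0"
      using x0 by (intro cINF_lower bdd_belowI2[where m="A (\<lambda>_. 1) x0"]) auto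
    show "A (\<lambda>_. 1) x0 \<le> (INF x\<in>{0..1}. A (\<lambda>_. 1) x)"
      using x0 by (intro cINF_greatest) auto
  qed
  define m where "m = A (\<lambda>_. 1) x0"
  have m0: "m > 0" using assms(4) x0 unfolding m_def by auto
  have Mm: "M = 1 / m" unfolding M_def inf m_def ..
  define N1 where "N1 = norm01 (\<lambda>x. T n (\<lambda>_. 1) x - A (\<lambda>_. 1) x)"
  define NA where "NA = norm01 (A f)"
  define N2 where "N2 = norm01 (\<lambda>x. T n (\<lambda>_. 1) x * A (\<lambda>_. 1) x)"
  have c1: "continuous_on {0..1} (\<lambda>x. T n (\<lambda>_. 1) x - A (\<lambda>_. 1) x)" using cs by (intro continuous_intros)
  have c2: "continuous_on {0..1} (\<lambda>x. T n (\<lambda>_. 1) x * A (\<lambda>_. 1) x)" using cs by (intro continuous_intros)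
  have N10: "N1 \<ge> 0" unfolding N1_def using norm_ge[OF c1, of 0] by simp
  have main: "norm01 (\<lambda>x. T n f x - A f x) \<le> M * (N1 * NA + (N2 + 1) * \<omega>)"
  proof (rule norm_le, rule ballI)
    fix x :: real assume x: "x \<in> {0..1}"
    define a where "a = T n (\<lambda>_. 1) x"
    define b where "b = A (\<lambda>_. 1) x"
    define D where "D = b * T n f x - a * A f x"
    have b0: "b > 0" using assms(4) x unfolding b_def by auto
    have mb: "m \<le> b" using x0 x unfolding m_def b_def by auto
    have D: "\<bar>D\<bar> \<le> (N2 + 1) * \<omega>"
    proof -
      have "\<bar>D\<bar> \<le> (a * b + 1) * \<omega>" using pt[OF x] unfolding D_def a_def b_def by (simp add: mult.commute)
      also have "\<dots> \<le> (N2 + 1) * \<omega>"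
        using norm_ge[OF c2 x] om0 unfolding N2_def a_def b_def by (intro mult_right_mono) auto
      finally show ?thesis .
    qed
    have E: "\<bar>(a - b) * A f x\<bar> \<le> N1 * NA"
      unfolding abs_mult using norm_ge[OF c1 x] norm_ge[OF cs(4) x] N10
      unfolding N1_def NA_def a_def b_def by (intro mult_mono) auto
    have eq: "T n f x - A f x = (D + (a - b) * A f x) / b"
      unfolding D_def using b0 by (simp add: field_simps)
    have R0: "N1 * NA + (N2 + 1) * \<omega> \<ge> 0" using D E by linarith
    have "\<bar>T n f x - A f x\<bar> = \<bar>D + (a - b) * A f x\<bar> / b" unfolding eq using b0 by simp
    also have "\<dots> \<le> (N1 * NA + (N2 + 1) * \<omega>) / b"
      using D E b0 by (intro divide_right_mono) (auto intro: order_trans[OF abs_triangle_ineq])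
    also have "\<dots> \<le> (N1 * NA + (N2 + 1) * \<omega>) / m"
      using R0 m0 mb by (intro divide_left_mono) auto
    finally show "\<bar>T n f x - A f x\<bar> \<le> M * (N1 * NA + (N2 + 1) * \<omega>)" unfolding Mm by simp
  qed
  have P1: "norm01 (\<lambda>x. T n f x - A f x) \<le>
       M * (norm01 (\<lambda>x. T n (\<lambda>_. 1) x - A (\<lambda>_. 1) x) * norm01 (A f)
            + (norm01 (\<lambda>x. T n (\<lambda>_. 1) x * A (\<lambda>_. 1) x) + 1) * modcont f (\<mu> n))"
    using main unfolding N1_def NA_def N2_def \<omega>_def .
  have P2: "(\<forall>x\<in>{0..1}. T n (\<lambda>_. 1) x = A (\<lambda>_. 1) x) \<longrightarrow>
        norm01 (\<lambda>x. T n f x - A f x) \<le>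
          M * (norm01 (\<lambda>x. (A (\<lambda>_. 1) x) ^ 2) + 1) * modcont f (\<mu> n)"
  proof
    assume eqT: "\<forall>x\<in>{0..1}. T n (\<lambda>_. 1) x = A (\<lambda>_. 1) x"
    have "N1 = norm01 (\<lambda>_. 0)" unfolding N1_def norm01_def using eqT by (intro SUP_cong) auto
    then have N1z: "N1 = 0" unfolding norm01_def by simp
    have N2e: "N2 = norm01 (\<lambda>x. (A (\<lambda>_. 1) x) ^ 2)" unfolding N2_def norm01_def using eqT
      by (intro SUP_cong) (auto simp: power2_eq_square)
    show "norm01 (\<lambda>x. T n f x - A f x) \<le> M * (norm01 (\<lambda>x. (A (\<lambda>_. 1) x) ^ 2) + 1) * modcont f (\<mu> n)"
      using main unfolding N1z N2e \<omega>_def by (simp add: mult.assoc)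
  qed
  show "norm01 (\<lambda>x. T n f x - A f x) \<le>
       M * (norm01 (\<lambda>x. T n (\<lambda>_. 1) x - A (\<lambda>_. 1) x) * norm01 (A f)
            + (norm01 (\<lambda>x. T n (\<lambda>_. 1) x * A (\<lambda>_. 1) x) + 1) * modcont f (\<mu> n)) \<and> ((\<forall>x\<in>{0..1}. T n (\<lambda>_. 1) x = A (\<lambda>_. 1) x) \<longrightarrow>
        norm01 (\<lambda>x. T n f x - A f x) \<le>
          M * (norm01 (\<lambda>x. (A (\<lambda>_. 1) x) ^ 2) + 1) * modcont f (\<mu> n))" using P1 P2 by blast
qed

end
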